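(* Consider $N$ identical cells. For cell $i\in\{0,\dots,N-1\}$ let $x_i(t)\in\mathbb{R}^n$ be its state, $u_i\in\mathbb{R}$ a constant-in-time input, $y_i(t)\in\mathbb{R}$ its readout, and $w_i(t),v_i(t)\in\mathbb{R}^q$ its coupling output and coupling input, with dynamics $$\dot x_i=f(x_i,v_i,u_i),\qquad w_i=g(x_i),\qquad y_i=h(x_i),\qquad v=(M\otimes I_q)w,$$ where $f,g,h$ are continuously differentiable, $M\in\mathbb{R}^{N\times N}$, $\otimes$ is the Kronecker product, and $x,u,y,w,v$ denote the vertical concatenations over cells (e.g. $w=[w_0^T\cdots w_{N-1}^T]^T$). Assume: (1) $M\mathbf{1}_N=\mu\mathbf{1}_N$ for some $\mu\in\mathbb{R}$ (where $\mathbf{1}_N$ is the all-ones vector), and $M$ is diagonalizable as $M=T\Lambda T^{-1}$ with $\Lambda=\mathrm{diag}(\lambda_0(M),\dots,\lambda_{N-1}(M))$; (2) for a given $\bar u\in\mathbb{R}$ there is $\bar x^*\in\mathbb{R}^n$ with $f(\bar x^*,\mu g(\bar x^* ),\bar u)=0$; set $\underline{x}^*=\mathbf{1}_N\otimes\bar x^*$, $\underline{u}=\bar u\mathbf{1}_N$ and $\bar v^*=\mu g(\bar x^* )$ (so $(\underline{x}^*,\underline{u})$ is a spatially homogeneous steady state); (3) this homogeneous steady state is asymptotically stable, i.e. the matrix $(I_N\otimes A)+(I_N\otimes B_v)(M\otimes I_q)(I_N\otimes G)$ below has all eigenvalues with negative real part. Let $A=\frac{\partial f}{\partial x_i}$,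 $B_v=\frac{\partial f}{\partial v_i}$, $B_u=\frac{\partial f}{\partial u_i}$ evaluated at $(\bar x^*,\bar v^*,\bar u)$, and $C=\frac{dh}{dx_i}(\bar x^* )$, $G=\frac{dg}{dx_i}(\bar x^* )$, and consider the linearized system $$\dot{\tilde x}=\big[(I_N\otimes A)+(I_N\otimes B_v)(M\otimes I_q)(I_N\otimes G)\big]\tilde x+(I_N\otimes B_u)\tilde u,\qquad \tilde y=(I_N\otimes C)\tilde x .$$ For a constant-in-time, spatially varying input $u\in\mathbb{R}^N$, put $\tilde u=u-\underline{u}$ and $\hat u=T^{-1}\tilde u$. Then the steady-state perturbed readout $\tilde y^*$ of the linearized system satisfies $\hat y^*:=T^{-1}\tilde y^*=S\hat u$, where $S$ is the diagonal $N\times N$ matrix with entries $$[S]_{kk}=-C\big(A+\lambda_k(M)B_vG\big)^{-1}B_u,\qquad k=0,\dots,N-1.$$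
   Context: The columns of $T$ are called spatial modes and the numbers $[S]_{kk}$ filter coefficients. $I_m$ denotes the $m\times m$ identity matrix. *)

theory Defs
  imports "HOL-Analysis.Analysis"
begin

text \<open>Kronecker product of matrices; index (i,k) of the result corresponds to
  block i, entry k inside the block (vertical concatenation over cells).\<close>
definition kron :: "'a::times^'j^'i \<Rightarrow> 'a^'l^'k \<Rightarrow> 'a^('j \<times> 'l)^('i \<times> 'k)" where
  "kron M P = (\<chi> p r. M $ fst p $ fst r * P $ snd p $ snd r)"

definition cvec :: "real^'n \<Rightarrow> complex^'n" where
  "cvec x = (\<chi> i. complex_of_real (x $ i))"

definition cmat :: "real^'n^'m \<Rightarrow> complex^'n^'m" where
  "cmat A = (\<chi> i j. complex_of_real (A $ i $ j))"

definition diagm :: "('n \<Rightarrow> 'a::zero) \<Rightarrow> 'a^'n^'n" where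
  "diagm d = (\<chi> i j. if i = j then d i else 0)"

definition hurwitz :: "real^'n^'n \<Rightarrow> bool" where
  "hurwitz A \<longleftrightarrow> (\<forall>(l::complex) (v::complex^'n). v \<noteq> 0 \<and> cmat A *v v = l *s v \<longrightarrow> Re l < 0)"

definition ones :: "'a::one^'n" where
  "ones = (\<chi> i. 1)"

end

theory Submission
  imports Defs
begin


lemma sum_UNIV_prod: "(\<Sum>p\<in>(UNIV::('a::finite \<times> 'b::finite) set). f p) = (\<Sum>i\<in>UNIV. \<Sum>b\<in>UNIV. f (i,b))"
proof -
  have "(\<Sum>i\<in>UNIV. \<Sum>b\<in>UNIV. f (i,b)) = (\<Sum>(i,b)\<in>UNIV \<times> UNIV. f (i,b))"
    by (rule sum.cartesian_product)
  then show ?thesis by simp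
qed

lemma mv_nth: "((X::'a::semiring_1^'n^'m) *v v) $ p = (\<Sum>q\<in>UNIV. X$p$q * v$q)"
  by (simp add: matrix_vector_mult_def)

lemma mm_nth: "((X::'a::semiring_1^'n^'m) ** Y) $ i $ j = (\<Sum>k\<in>UNIV. X$i$k * Y$k$j)"
  by (simp add: matrix_matrix_mult_def)

lemma kron_nth: "kron P Q $ (i,a) $ (j,b) = P$i$j * Q$a$b"
  by (simp add: kron_def)

lemma mat_nth: "(mat c :: 'a::zero^'n^'n) $ i $ j = (if i = j then c else 0)"
  by (simp add: mat_def)

lemma matinv: assumes "invertible (X::'a::semiring_1^'n^'n)"
  shows "X ** matrix_inv X = mat 1" "matrix_inv X ** X = mat 1"
proof -
  have "X ** matrix_inv X = mat 1 \<and> matrix_inv X ** X = mat 1"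
    unfolding matrix_inv_def using assms unfolding invertible_def by (rule someI_ex)
  then show "X ** matrix_inv X = mat 1" "matrix_inv X ** X = mat 1" by auto
qed

lemma invertible_ker: "invertible (X::'a::field^'n^'n) \<longleftrightarrow> (\<forall>x. X *v x = 0 \<longrightarrow> x = 0)"
  by (simp add: invertible_left_inverse matrix_left_invertible_ker)

lemma if01_mult1: "(if P then y else 0) * (x::'a::semiring_0) = (if P then y * x else 0)"
  by simp
lemma if01_mult2: "(x::'a::semiring_0) * (if P then y else 0) = (if P then x * y else 0)"
  by simp
lemmas if01_mult = if01_mult1 if01_mult2
lemma sum_if0: "(\<Sum>x\<in>A. if P then f x else 0) = (if P then (\<Sum>x\<in>A. f x) else 0)"
  by (cases P) auto

lemma swap2: "(\<Sum>i\<in>I. (p i::'a::comm_semiring_0) * (\<Sum>b\<in>B. a b * x i b)) = (\<Sum>b\<in>B. a b * (\<Sum>i\<in>I. p i * x i b))"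
proof -
  have "(\<Sum>i\<in>I. p i * (\<Sum>b\<in>B. a b * x i b)) = (\<Sum>i\<in>I. \<Sum>b\<in>B. a b * (p i * x i b))"
    by (simp add: sum_distrib_left mult.left_commute)
  also have "\<dots> = (\<Sum>b\<in>B. \<Sum>i\<in>I. a b * (p i * x i b))" by (rule sum.swap)
  also have "\<dots> = (\<Sum>b\<in>B. a b * (\<Sum>i\<in>I. p i * x i b))" by (simp add: sum_distrib_left)
  finally show ?thesis .
qed

lemma swap3: "(\<Sum>i\<in>I. (p i::'a::comm_semiring_0) * (\<Sum>j\<in>J. m i j * z j)) = (\<Sum>j\<in>J. (\<Sum>i\<in>I. p i * m i j) * z j)"
proof -
  have "(\<Sum>i\<in>I. p i * (\<Sum>j\<in>J. m i j * z j)) = (\<Sum>i\<in>I. \<Sum>j\<in>J. p i * m i j * z j)"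
    by (simp add: sum_distrib_left mult.assoc)
  also have "\<dots> = (\<Sum>j\<in>J. \<Sum>i\<in>I. p i * m i j * z j)" by (rule sum.swap)
  also have "\<dots> = (\<Sum>j\<in>J. (\<Sum>i\<in>I. p i * m i j) * z j)" by (simp add: sum_distrib_right)
  finally show ?thesis .
qed

lemma mv_neg: "(X::'a::comm_ring_1^'n^'m) *v (- x) = - (X *v x)"
  by (simp add: vec_eq_iff mv_nth sum_negf)

lemma cmat_nth: "cmat X $ i $ j = complex_of_real (X$i$j)"
  by (simp add: cmat_def)
lemma cvec_nth: "cvec x $ i = complex_of_real (x$i)"
  by (simp add: cvec_def)
lemma cmat_mv: "cmat X *v cvec x = cvec (X *v x)"
  by (simp add: vec_eq_iff mv_nth cmat_nth cvec_nth)

lemma kronI_BG: 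
  fixes M :: "'a::comm_ring_1^'N^'N" and Bv :: "'a^'q^'n" and G :: "'a^'n^'q"
  shows "(kron (mat 1 :: 'a^'N^'N) Bv ** kron M (mat 1 :: 'a^'q^'q) ** kron (mat 1 :: 'a^'N^'N) G) $ (i,a) $ (j,b)
     = M$i$j * (Bv ** G)$a$b"
proof -
  have 1: "(kron (mat 1 :: 'a^'N^'N) Bv ** kron M (mat 1 :: 'a^'q^'q)) $ (i,a) $ (k,c) = M$i$k * Bv$a$c" for k c
    by (simp add: mm_nth kron_nth mat_nth sum_UNIV_prod if01_mult mult.commute cong: if_cong)
  have k2: "(kron (mat 1 :: 'a^'N^'N) Bv ** kron M (mat 1 :: 'a^'q^'q)) $ (i,a) $ p = M$i$fst p * Bv$a$snd p" for p
    using 1 by (cases p) auto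
  show ?thesis
    unfolding mm_nth[of "kron (mat 1 :: 'a^'N^'N) Bv ** kron M (mat 1 :: 'a^'q^'q)" "kron (mat 1 :: 'a^'N^'N) G"] k2
    by (simp add: kron_nth mat_nth sum_UNIV_prod if01_mult sum_if0 mm_nth sum_distrib_left mult.assoc cong: if_cong)
qed



theorem proposition1:
  fixes f :: "real^'n \<Rightarrow> real^'q \<Rightarrow> real \<Rightarrow> real^'n"
    and g :: "real^'n \<Rightarrow> real^'q"
    and h :: "real^'n \<Rightarrow> real"
    and M :: "real^'N^'N" and \<mu> :: real
    and T :: "complex^'N^'N" and lam :: "'N \<Rightarrow> complex"
    and ubar :: real and xs :: "real^'n" and vs :: "real^'q"
    and A :: "real^'n^'n" and Bv :: "real^'q^'n" and Bu :: "real^1^'n"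
    and C :: "real^'n^1" and G :: "real^'n^'q"
  assumes M_row: "M *v ones = \<mu> *s ones"
    and T_inv: "invertible T"
    and M_diag: "cmat M = T ** diagm lam ** matrix_inv T"
    and equil: "f xs (\<mu> *s g xs) ubar = 0"
    and vs_def: "vs = \<mu> *s g xs"
    and dA: "((\<lambda>x. f x vs ubar) has_derivative (\<lambda>d. A *v d)) (at xs)"
    and dBv: "((\<lambda>v. f xs v ubar) has_derivative (\<lambda>d. Bv *v d)) (at vs)"
    and dBu: "((\<lambda>u. f xs vs u) has_derivative (\<lambda>d. Bu *v (\<chi> _. d))) (at ubar)"
    and dC: "(h has_derivative (\<lambda>d. (C *v d) $ 1)) (at xs)"
    and dG: "(g has_derivative (\<lambda>d. G *v d)) (at xs)"
    and stable: "hurwitz (kron (mat 1 :: real^'N^'N) A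
                   + kron (mat 1 :: real^'N^'N) Bv ** kron M (mat 1 :: real^'q^'q)
                     ** kron (mat 1 :: real^'N^'N) G)"
  shows "\<forall>u :: real^'N.
     let Acl = kron (mat 1 :: real^'N^'N) A
                 + kron (mat 1 :: real^'N^'N) Bv ** kron M (mat 1 :: real^'q^'q)
                   ** kron (mat 1 :: real^'N^'N) G;
         ut = u - ubar *s ones;
         uhat = matrix_inv T *v cvec ut;
         steady = (\<lambda>xt :: real^('N \<times> 'n).
                    Acl *v xt + kron (mat 1 :: real^'N^'N) Bu *v (\<chi> p. ut $ fst p) = 0);
         S = diagm (\<lambda>k. - (cmat C ** matrix_inv (cmat A + mat (lam k) ** cmat (Bv ** G))
                              ** cmat Bu) $ 1 $ 1)
     in (\<forall>k. invertible (cmat A + mat (lam k) ** cmat (Bv ** G)))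
        \<and> (\<exists>!xt. steady xt)
        \<and> (\<forall>xt. steady xt \<longrightarrow>
              (let yt = (\<chi> i. (kron (mat 1 :: real^'N^'N) C *v xt) $ (i, 1)) :: real^'N
               in matrix_inv T *v cvec yt = S *v uhat))"
proof (rule allI)
  fix u :: "real^'N"
  let ?P = "matrix_inv T"
  let ?D = "diagm lam :: complex^'N^'N"
  let ?BG = "cmat (Bv ** G)"
  define Acl where "Acl = kron (mat 1 :: real^'N^'N) A
                 + kron (mat 1 :: real^'N^'N) Bv ** kron M (mat 1 :: real^'q^'q)
                   ** kron (mat 1 :: real^'N^'N) G"
  define ut where "ut = u - ubar *s ones"
  define uhat where "uhat = matrix_inv T *v cvec ut"
  define Mk where "Mk k = cmat A + mat (lam k) ** cmat (Bv ** G)" for k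
  define S where "S = diagm (\<lambda>k. - (cmat C ** matrix_inv (Mk k) ** cmat Bu) $ 1 $ 1)"
  have PT: "?P ** T = mat 1" and TP: "T ** ?P = mat 1" using matinv[OF T_inv] by auto
  have PM: "?P ** cmat M = ?D ** ?P"
    unfolding M_diag by (metis PT matrix_mul_assoc matrix_mul_lid)
  have MT: "cmat M ** T = T ** ?D"
    unfolding M_diag by (metis PT matrix_mul_assoc matrix_mul_rid)
  have PM_nth: "(\<Sum>i\<in>UNIV. ?P$k$i * cmat M$i$j) = lam k * ?P$k$j" for k j
  proof -
    have "(\<Sum>i\<in>UNIV. ?P$k$i * cmat M$i$j) = (?P ** cmat M)$k$j" by (simp add: mm_nth)
    also have "\<dots> = lam k * ?P$k$j" unfolding PM by (simp add: mm_nth diagm_def if01_mult)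
    finally show ?thesis .
  qed
  have MT_nth: "(\<Sum>j\<in>UNIV. cmat M$i$j * T$j$k) = T$i$k * lam k" for i k
  proof -
    have "(\<Sum>j\<in>UNIV. cmat M$i$j * T$j$k) = (cmat M ** T)$i$k" by (simp add: mm_nth)
    also have "\<dots> = T$i$k * lam k" unfolding MT by (simp add: mm_nth diagm_def if01_mult)
    finally show ?thesis .
  qed
  have Acl_nth: "Acl $ (i,a) $ (j,b) = (if i = j then A$a$b else 0) + M$i$j * (Bv ** G)$a$b" for i a j b
    unfolding Acl_def by (simp add: kronI_BG kron_nth mat_nth)
  have cAcl_mv: "(cmat Acl *v z) $ (i,a) = (\<Sum>b\<in>UNIV. cmat A$a$b * z$(i,b))
        + (\<Sum>j\<in>UNIV. cmat M$i$j * (\<Sum>b\<in>UNIV. ?BG$a$b * z$(j,b)))" for z i a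
  proof -
    have "(cmat Acl *v z) $ (i,a) = (\<Sum>j\<in>UNIV. \<Sum>b\<in>UNIV. ((if i = j then cmat A$a$b else 0) + cmat M$i$j * ?BG$a$b) * z$(j,b))"
      by (simp add: mv_nth sum_UNIV_prod cmat_nth Acl_nth if_distrib[where f=complex_of_real] cong: if_cong)
    also have "\<dots> = (\<Sum>j\<in>UNIV. \<Sum>b\<in>UNIV. (if i = j then cmat A$a$b * z$(j,b) else 0))
       + (\<Sum>j\<in>UNIV. \<Sum>b\<in>UNIV. cmat M$i$j * (?BG$a$b * z$(j,b)))"
      by (simp add: distrib_right sum.distrib mult.assoc if01_mult1)
    also have "\<dots> = (\<Sum>b\<in>UNIV. cmat A$a$b * z$(i,b))
       + (\<Sum>j\<in>UNIV. cmat M$i$j * (\<Sum>b\<in>UNIV. ?BG$a$b * z$(j,b)))"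
      by (simp add: sum_if0 sum_distrib_left)
    finally show ?thesis .
  qed
  have Mk_mv: "(Mk k *v w) $ a = (\<Sum>b\<in>UNIV. cmat A$a$b * w$b) + lam k * (\<Sum>b\<in>UNIV. ?BG$a$b * w$b)" for k w a
    unfolding Mk_def by (simp add: mv_nth mm_nth mat_nth if01_mult1 sum_if0 distrib_right sum.distrib sum_distrib_left mult.assoc)
  have hur: "\<And>l v. v \<noteq> 0 \<Longrightarrow> cmat Acl *v v = l *s v \<Longrightarrow> Re l < 0"
    using stable unfolding hurwitz_def Acl_def by blast
  have inj_ker: "\<And>x. Acl *v x = 0 \<Longrightarrow> x = 0"
  proof (rule ccontr)
    fix x assume ax: "Acl *v x = 0" and nz: "x \<noteq> 0"
    have "cvec x \<noteq> 0" using nz by (auto simp: vec_eq_iff cvec_nth)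
    moreover have "cmat Acl *v cvec x = 0 *s cvec x" by (simp add: cmat_mv ax vec_eq_iff cvec_nth)
    ultimately have "Re 0 < 0" by (rule hur)
    then show False by simp
  qed
  have Acl_inv: "invertible Acl" unfolding invertible_ker using inj_ker by blast
  define bb where "bb = kron (mat 1 :: real^'N^'N) Bu *v (\<chi> p. ut $ fst p)"
  have F2: "\<exists>!xt. Acl *v xt + bb = 0"
  proof
    show "Acl *v (matrix_inv Acl *v (- bb)) + bb = 0"
      by (simp add: matrix_vector_mul_assoc matinv[OF Acl_inv])
  next
    fix x1 assume h1: "Acl *v x1 + bb = 0"
    have "Acl *v (x1 - matrix_inv Acl *v (- bb)) = 0"
      using h1 by (simp add: matrix_vector_mult_diff_distrib matrix_vector_mul_assoc matinv[OF Acl_inv]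
         eq_neg_iff_add_eq_0)
    then show "x1 = matrix_inv Acl *v (- bb)" using inj_ker by fastforce
  qed
  have F1: "invertible (Mk k)" for k
    unfolding invertible_ker
  proof (intro allI impI, rule ccontr)
    fix w assume mw: "Mk k *v w = 0" and wnz: "w \<noteq> 0"
    define v :: "complex^('N \<times> 'n)" where "v = (\<chi> p. T$(fst p)$k * w$(snd p))"
    obtain a where wa: "w$a \<noteq> 0" using wnz by (auto simp: vec_eq_iff)
    have "\<exists>i. T$i$k \<noteq> 0"
    proof (rule ccontr)
      assume "\<not> ?thesis"
      then have "(?P ** T)$k$k = 0" by (simp add: mm_nth)
      then show False using PT by (simp add: mat_nth)
    qed
    then obtain i where ti: "T$i$k \<noteq> 0" by blast
    have vnz: "v \<noteq> 0"
    proof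
      assume "v = 0"
      then have "v $ (i,a) = 0" by simp
      then show False using ti wa by (simp add: v_def)
    qed
    have "cmat Acl *v v = 0 *s v"
    proof (subst vec_eq_iff, intro allI)
      fix p :: "'N \<times> 'n"
      obtain j c where p: "p = (j,c)" by (cases p)
      have "(cmat Acl *v v) $ (j,c) = (\<Sum>b\<in>UNIV. cmat A$c$b * (T$j$k * w$b))
        + (\<Sum>l\<in>UNIV. cmat M$j$l * (\<Sum>b\<in>UNIV. ?BG$c$b * (T$l$k * w$b)))"
        by (simp add: cAcl_mv v_def)
      also have "\<dots> = T$j$k * (\<Sum>b\<in>UNIV. cmat A$c$b * w$b)
        + (\<Sum>l\<in>UNIV. cmat M$j$l * T$l$k) * (\<Sum>b\<in>UNIV. ?BG$c$b * w$b)"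
        by (simp add: sum_distrib_left sum_distrib_right mult_ac) (rule sum.swap)
      also have "\<dots> = T$j$k * (Mk k *v w) $ c"
        unfolding MT_nth Mk_mv by (simp add: algebra_simps)
      also have "\<dots> = 0" by (simp add: mw)
      finally show "(cmat Acl *v v) $ p = (0 *s v) $ p" by (simp add: p)
    qed
    then have "Re 0 < 0" using vnz hur by blast
    then show False by simp
  qed
  have F3: "matrix_inv T *v cvec (\<chi> i. (kron (mat 1 :: real^'N^'N) C *v xt) $ (i, 1)) = S *v uhat"
    if st: "Acl *v xt + bb = 0" for xt
  proof -
    define xc where "xc = cvec xt"
    define xh where "xh k b = (\<Sum>i\<in>UNIV. ?P$k$i * xc$(i,b))" for k b
    define wk where "wk k = (\<chi> b. xh k b)" for k
    have bb_nth: "bb $ (i,a) = Bu$a$1 * ut$i" for i a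
      by (simp add: bb_def mv_nth sum_UNIV_prod kron_nth mat_nth if01_mult sum_if0 cong: if_cong)
    have uhat_nth: "uhat $ k = (\<Sum>i\<in>UNIV. ?P$k$i * complex_of_real (ut$i))" for k
      by (simp add: uhat_def mv_nth cvec_nth)
    have ceq: "(\<Sum>b\<in>UNIV. cmat A$a$b * xc$(i,b))
        + (\<Sum>j\<in>UNIV. cmat M$i$j * (\<Sum>b\<in>UNIV. ?BG$a$b * xc$(j,b)))
        + cmat Bu$a$1 * complex_of_real (ut$i) = 0" for i a
    proof -
      have "(cmat Acl *v xc) $ (i,a) + complex_of_real (bb $ (i,a)) = complex_of_real ((Acl *v xt + bb) $ (i,a))"
        by (simp add: xc_def cmat_mv cvec_nth)
      also have "\<dots> = 0" using st by simp
      finally show ?thesis by (simp add: cAcl_mv bb_nth cmat_nth)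
    qed
    have teq: "(Mk k *v wk k) $ a + cmat Bu$a$1 * uhat$k = 0" for k a
    proof -
      have "0 = (\<Sum>i\<in>UNIV. ?P$k$i * ((\<Sum>b\<in>UNIV. cmat A$a$b * xc$(i,b))
        + (\<Sum>j\<in>UNIV. cmat M$i$j * (\<Sum>b\<in>UNIV. ?BG$a$b * xc$(j,b)))
        + cmat Bu$a$1 * complex_of_real (ut$i)))" by (simp add: ceq)
      also have "\<dots> = (\<Sum>i\<in>UNIV. ?P$k$i * (\<Sum>b\<in>UNIV. cmat A$a$b * xc$(i,b)))
        + (\<Sum>i\<in>UNIV. ?P$k$i * (\<Sum>j\<in>UNIV. cmat M$i$j * (\<Sum>b\<in>UNIV. ?BG$a$b * xc$(j,b))))
        + cmat Bu$a$1 * uhat$k"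
        by (simp add: distrib_left sum.distrib uhat_nth sum_distrib_left mult_ac)
      also have "(\<Sum>i\<in>UNIV. ?P$k$i * (\<Sum>b\<in>UNIV. cmat A$a$b * xc$(i,b))) = (\<Sum>b\<in>UNIV. cmat A$a$b * xh k b)"
        unfolding xh_def by (rule swap2)
      also have "(\<Sum>i\<in>UNIV. ?P$k$i * (\<Sum>j\<in>UNIV. cmat M$i$j * (\<Sum>b\<in>UNIV. ?BG$a$b * xc$(j,b))))
          = (\<Sum>j\<in>UNIV. (\<Sum>i\<in>UNIV. ?P$k$i * cmat M$i$j) * (\<Sum>b\<in>UNIV. ?BG$a$b * xc$(j,b)))"
        by (rule swap3)
      also have "\<dots> = lam k * (\<Sum>j\<in>UNIV. ?P$k$j * (\<Sum>b\<in>UNIV. ?BG$a$b * xc$(j,b)))"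
        unfolding PM_nth by (simp add: sum_distrib_left mult.assoc)
      also have "\<dots> = lam k * (\<Sum>b\<in>UNIV. ?BG$a$b * xh k b)"
        unfolding xh_def by (rule arg_cong[where f="\<lambda>z. lam k * z"], rule swap2)
      finally show ?thesis by (simp add: Mk_mv wk_def)
    qed
    have wk_eq: "wk k = - (matrix_inv (Mk k) *v (cmat Bu *v (\<chi> _. uhat$k)))" for k
    proof -
      have "Mk k *v wk k = - (cmat Bu *v (\<chi> _. uhat$k))"
        using teq[of k] by (simp add: vec_eq_iff mv_nth eq_neg_iff_add_eq_0 mult.commute)
      then have "matrix_inv (Mk k) *v (Mk k *v wk k) = - (matrix_inv (Mk k) *v (cmat Bu *v (\<chi> _. uhat$k)))"
        by (simp add: mv_neg)
      then show ?thesis by (simp add: matrix_vector_mul_assoc matinv[OF F1])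
    qed
    show ?thesis
    proof (subst vec_eq_iff, intro allI)
      fix k
      have "(matrix_inv T *v cvec (\<chi> i. (kron (mat 1 :: real^'N^'N) C *v xt) $ (i, 1))) $ k
          = (\<Sum>i\<in>UNIV. ?P$k$i * (\<Sum>b\<in>UNIV. cmat C$1$b * xc$(i,b)))"
        by (simp add: mv_nth cvec_nth sum_UNIV_prod kron_nth mat_nth if01_mult sum_if0 xc_def cmat_nth
             cong: if_cong)
      also have "\<dots> = (cmat C *v wk k) $ 1"
        unfolding mv_nth wk_def xh_def by (simp only: vec_lambda_beta) (rule swap2)
      also have "\<dots> = - ((cmat C ** matrix_inv (Mk k) ** cmat Bu) *v (\<chi> _. uhat$k)) $ 1"
        by (simp add: wk_eq matrix_vector_mul_assoc mv_neg matrix_mul_assoc)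
      also have "\<dots> = (S *v uhat) $ k"
        by (simp add: S_def mv_nth diagm_def if01_mult)
      finally show "(matrix_inv T *v cvec (\<chi> i. (kron (mat 1 :: real^'N^'N) C *v xt) $ (i, 1))) $ k = (S *v uhat) $ k" .
    qed
  qed
  show "
     let Acl = kron (mat 1 :: real^'N^'N) A
                 + kron (mat 1 :: real^'N^'N) Bv ** kron M (mat 1 :: real^'q^'q)
                   ** kron (mat 1 :: real^'N^'N) G;
         ut = u - ubar *s ones;
         uhat = matrix_inv T *v cvec ut;
         steady = (\<lambda>xt :: real^('N \<times> 'n).
                    Acl *v xt + kron (mat 1 :: real^'N^'N) Bu *v (\<chi> p. ut $ fst p) = 0);
         S = diagm (\<lambda>k. - (cmat C ** matrix_inv (cmat A + mat (lam k) ** cmat (Bv ** G))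
                              ** cmat Bu) $ 1 $ 1)
     in (\<forall>k. invertible (cmat A + mat (lam k) ** cmat (Bv ** G)))
        \<and> (\<exists>!xt. steady xt)
        \<and> (\<forall>xt. steady xt \<longrightarrow>
              (let yt = (\<chi> i. (kron (mat 1 :: real^'N^'N) C *v xt) $ (i, 1)) :: real^'N
               in matrix_inv T *v cvec yt = S *v uhat))"
    unfolding Let_def using F1 F2 F3 unfolding Acl_def ut_def uhat_def S_def Mk_def bb_def by blast
qed

end
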